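(* Let $G$ be a group, $A$ an additive abelian group with a right $G$-action by group automorphisms, and $n\in\mathbb Z_+$. For every $a\in\mathcal P_n(G,A)$, all values $[D^na](g_1,\dots,g_n)$ are $G$-invariant, i.e. $D^n(\mathcal P_n(G,A))\subseteq\mathcal C^n(G,A^G)$. Consequently the restriction $D^n|_{\mathcal P_n}:\mathcal P_n(G,A)\to\mathcal C^n(G,A^G)$ has kernel $\mathcal P_{n-1}(G,A)$ (for $n\ge1$), giving an exact sequence $0\to\mathcal P_{n-1}(G,A)\to\mathcal P_n(G,A)\to\mathcal C^n(G,A^G)$ and an injective homomorphism $\mathcal P_n(G,A)/\mathcal P_{n-1}(G,A)\hookrightarrow\mathcal C^n(G,A^G)$.
   Context: Right action: $a\mapsto a^g$, $a^{\mathbf e}=a$, $(a^g)^h=a^{gh}$, additive in $a$; $\mathbf e$ the identity. $A^G=\{a:a^g=a\ \forall g\}$. $\mathcal C^0(G,M)=M$ and for $n\ge1$, $\mathcal C^n(G,M)$ is the group of functions $G^n\to M$ vanishing whenever some argument is $\mathbf e$ (for $M=A$ or $M=A^G$). For $n\ge1$, $(d_nc)(g_1,\dots,g_n)=[c(g_1,\dots,g_{n-1})]^{g_n}-c(g_1,\dots,g_{n-1})$; $D^0=\mathrm{id}_A$, $D^n=d_nD^{n-1}$; $\mathcal P_n(G,A)=\ker D^{n+1}$. *)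

theory Defs
  imports "HOL-Algebra.Group"
begin

definition right_action :: "('g, 'm) monoid_scheme \<Rightarrow> ('a::ab_group_add \<Rightarrow> 'g \<Rightarrow> 'a) \<Rightarrow> bool" where
  "right_action G act \<longleftrightarrow>
     (\<forall>a. act a \<one>\<^bsub>G\<^esub> = a) \<and>
     (\<forall>a. \<forall>g\<in>carrier G. \<forall>h\<in>carrier G. act (act a g) h = act a (g \<otimes>\<^bsub>G\<^esub> h)) \<and>
     (\<forall>a b. \<forall>g\<in>carrier G. act (a + b) g = act a g + act b g)"

definition invariants :: "('g, 'm) monoid_scheme \<Rightarrow> ('a \<Rightarrow> 'g \<Rightarrow> 'a) \<Rightarrow> 'a set" where
  "invariants G act = {a. \<forall>g\<in>carrier G. act a g = a}"

definition tuples :: "('g, 'm) monoid_scheme \<Rightarrow> nat \<Rightarrow> 'g list set" where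
  "tuples G n = {gs. length gs = n \<and> set gs \<subseteq> carrier G}"

text \<open>Cochains C^n(G,M): functions on G^n with values in M, vanishing whenever some argument is
  the identity. For n = 0 such a function is just its value at the empty tuple, i.e. an element of M.\<close>
definition cochains :: "('g, 'm) monoid_scheme \<Rightarrow> nat \<Rightarrow> ('a::zero) set \<Rightarrow> ('g list \<Rightarrow> 'a) set" where
  "cochains G n M = {c. \<forall>gs\<in>tuples G n. c gs \<in> M \<and> (\<one>\<^bsub>G\<^esub> \<in> set gs \<longrightarrow> c gs = 0)}"

fun Dn :: "('a::ab_group_add \<Rightarrow> 'g \<Rightarrow> 'a) \<Rightarrow> nat \<Rightarrow> 'a \<Rightarrow> 'g list \<Rightarrow> 'a" where
  "Dn act 0 a = (\<lambda>gs. if gs = [] then a else 0)"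
| "Dn act (Suc n) a = (\<lambda>gs. if length gs = Suc n
      then act (Dn act n a (butlast gs)) (last gs) - Dn act n a (butlast gs) else 0)"

definition Pn :: "('g, 'm) monoid_scheme \<Rightarrow> ('a::ab_group_add \<Rightarrow> 'g \<Rightarrow> 'a) \<Rightarrow> nat \<Rightarrow> 'a set" where
  "Pn G act n = {a. \<forall>gs\<in>tuples G (Suc n). Dn act (Suc n) a gs = 0}"

end

theory Submission
  imports Defs
begin

lemma ra_one: "right_action G act \<Longrightarrow> act a \<one>\<^bsub>G\<^esub> = a"
  unfolding right_action_def by blast

lemma ra_add: "right_action G act \<Longrightarrow> g \<in> carrier G \<Longrightarrow> act (a + b) g = act a g + act b g"
  unfolding right_action_def by blast

lemma ra_zero: "right_action G act \<Longrightarrow> g \<in> carrier G \<Longrightarrow> act 0 g = 0"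
  using ra_add[of G act g 0 0] by simp

lemma Dn_add:
  assumes "right_action G act" "set gs \<subseteq> carrier G"
  shows "Dn act k (a + b) gs = Dn act k a gs + Dn act k b gs"
  using assms(2)
proof (induction k arbitrary: gs)
  case 0 then show ?case by simp
next
  case (Suc k)
  show ?case
  proof (cases "length gs = Suc k")
    case True
    then have ne: "gs \<noteq> []" by auto
    have l: "last gs \<in> carrier G" using ne Suc.prems last_in_set by blast
    have b: "set (butlast gs) \<subseteq> carrier G" using Suc.prems in_set_butlastD by fastforce
    show ?thesis using True Suc.IH[OF b] ra_add[OF assms(1) l] by (simp add: algebra_simps)
  qed simp
qed

lemma Dn_diff:
  assumes "right_action G act" "set gs \<subseteq> carrier G"
  shows "Dn act k (a - b) gs = Dn act k a gs - Dn act k b gs"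
  using Dn_add[OF assms, of k "a - b" b] by (simp add: algebra_simps)

lemma Dn_one:
  assumes "right_action G act" "gs \<in> tuples G k" "\<one>\<^bsub>G\<^esub> \<in> set gs"
  shows "Dn act k a gs = 0"
  using assms(2,3)
proof (induction k arbitrary: gs)
  case 0 then show ?case by (simp add: tuples_def)
next
  case (Suc k)
  then have ne: "gs \<noteq> []" by (auto simp: tuples_def)
  then obtain hs g where gs: "gs = hs @ [g]" by (metis append_butlast_last_id)
  have g: "g \<in> carrier G" and hs: "hs \<in> tuples G k" using Suc.prems gs by (auto simp: tuples_def)
  show ?case
  proof (cases "g = \<one>\<^bsub>G\<^esub>")
    case True then show ?thesis using gs Suc.prems ra_one[OF assms(1)] by (simp add: tuples_def)
  next
    case False
    then have "\<one>\<^bsub>G\<^esub> \<in> set hs" using Suc.prems gs by auto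
    then have "Dn act k a hs = 0" using Suc.IH hs by blast
    then show ?thesis using gs Suc.prems ra_zero[OF assms(1) g] by (simp add: tuples_def)
  qed
qed

lemma Pn_mono:
  assumes "right_action G act" "a \<in> Pn G act m"
  shows "a \<in> Pn G act (Suc m)"
  unfolding Pn_def
proof (intro CollectI ballI)
  fix gs assume gs: "gs \<in> tuples G (Suc (Suc m))"
  then have ne: "gs \<noteq> []" by (auto simp: tuples_def)
  have l: "last gs \<in> carrier G" using ne gs last_in_set by (fastforce simp: tuples_def)
  have "butlast gs \<in> tuples G (Suc m)" using gs by (auto simp: tuples_def dest: in_set_butlastD)
  then have "Dn act (Suc m) a (butlast gs) = 0" using assms(2) by (auto simp: Pn_def)
  then show "Dn act (Suc (Suc m)) a gs = 0" using gs ra_zero[OF assms(1) l] by (simp add: tuples_def)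
qed

lemma Pn_inv:
  assumes "right_action G act" "a \<in> Pn G act n" "hs \<in> tuples G n"
  shows "Dn act n a hs \<in> invariants G act"
  unfolding invariants_def
proof (intro CollectI ballI)
  fix g assume g: "g \<in> carrier G"
  have "hs @ [g] \<in> tuples G (Suc n)" using assms(3) g by (auto simp: tuples_def)
  then have "Dn act (Suc n) a (hs @ [g]) = 0" using assms(2) by (auto simp: Pn_def)
  then show "act (Dn act n a hs) g = Dn act n a hs" using assms(3) by (simp add: tuples_def)
qed

theorem lemma1p17:
  fixes G :: "('g, 'm) monoid_scheme" (structure)
    and act :: "'a::ab_group_add \<Rightarrow> 'g \<Rightarrow> 'a"
    and n :: nat
  assumes "group G"
    and "right_action G act"
  shows "(\<forall>a\<in>Pn G act n. Dn act n a \<in> cochains G n (invariants G act))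
    \<and> (n \<ge> 1 \<longrightarrow>
         Pn G act (n - 1) \<subseteq> Pn G act n
       \<and> (\<forall>a\<in>Pn G act n. \<forall>b\<in>Pn G act n. \<forall>gs\<in>tuples G n.
             Dn act n (a + b) gs = Dn act n a gs + Dn act n b gs)
       \<and> {a\<in>Pn G act n. \<forall>gs\<in>tuples G n. Dn act n a gs = 0} = Pn G act (n - 1)
       \<and> (\<forall>a\<in>Pn G act n. \<forall>b\<in>Pn G act n.
             (\<forall>gs\<in>tuples G n. Dn act n a gs = Dn act n b gs) \<longleftrightarrow> a - b \<in> Pn G act (n - 1)))"
proof (intro conjI impI)
  show "\<forall>a\<in>Pn G act n. Dn act n a \<in> cochains G n (invariants G act)"
    using Pn_inv[OF assms(2)] Dn_one[OF assms(2)] by (auto simp: cochains_def)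
next
  assume n: "n \<ge> 1"
  then obtain m where m: "n = Suc m" by (cases n) auto
  have sub: "Pn G act (n - 1) \<subseteq> Pn G act n" using Pn_mono[OF assms(2)] m by auto
  have ker: "\<And>a. (\<forall>gs\<in>tuples G n. Dn act n a gs = 0) \<longleftrightarrow> a \<in> Pn G act (n - 1)"
    using m by (simp add: Pn_def)
  show "Pn G act (n - 1) \<subseteq> Pn G act n" by (rule sub)
  show "\<forall>a\<in>Pn G act n. \<forall>b\<in>Pn G act n. \<forall>gs\<in>tuples G n.
             Dn act n (a + b) gs = Dn act n a gs + Dn act n b gs"
    using Dn_add[OF assms(2)] by (auto simp: tuples_def)
  show "{a\<in>Pn G act n. \<forall>gs\<in>tuples G n. Dn act n a gs = 0} = Pn G act (n - 1)"
    using ker sub by blast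
  have "\<And>a b. (\<forall>gs\<in>tuples G n. Dn act n a gs = Dn act n b gs) \<longleftrightarrow>
           (\<forall>gs\<in>tuples G n. Dn act n (a - b) gs = 0)"
    using Dn_diff[OF assms(2)] by (auto simp: tuples_def)
  then show "\<forall>a\<in>Pn G act n. \<forall>b\<in>Pn G act n.
             (\<forall>gs\<in>tuples G n. Dn act n a gs = Dn act n b gs) \<longleftrightarrow> a - b \<in> Pn G act (n - 1)"
    using ker by blast
qed

end
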